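(* Let $q$ be a prime power, $\alpha$ an element of multiplicative order $n$ in $\mathbb{F}_{q^s}$, and $\beta$ an element of multiplicative order $n_\ell$ in $\mathbb{F}_{q_\ell^{s_\ell}}$, where $\mathbb{F}_{q_\ell}=\mathbb{F}_{q^u}$; let $r=\mathrm{lcm}(s,us_\ell)$, so both lie in $\mathbb{F}_{q^r}$. Let $\mathcal{Z}\subseteq\{0,1,\dots,n_\ell-1\}$. If $\gcd(n,n_\ell)=1$, then for all $i,j\in\{0,1,\dots,n-1\}$ with $i\ne j$, $$\gcd\Big(\prod_{m\in\mathcal{Z}}(1-x\alpha^i\beta^m),\ \prod_{m\in\mathcal{Z}}(1-x\alpha^j\beta^m)\Big)=1$$ in $\mathbb{F}_{q^r}[x]$. *)

theory Defs
  imports "HOL-Computational_Algebra.Computational_Algebra"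
begin

definition mult_order :: "'a::field \<Rightarrow> nat" where
  "mult_order a = (if \<exists>n>0. a ^ n = 1 then (LEAST n. n > 0 \<and> a ^ n = 1) else 0)"

definition prime_power :: "nat \<Rightarrow> bool" where
  "prime_power q \<longleftrightarrow> (\<exists>p k. prime p \<and> k > 0 \<and> q = p ^ k)"

end

theory Submission
  imports Defs
begin

lemma mo_basic:
  fixes a :: "'a::field"
  assumes "mult_order a = n" "n > 0"
  shows "a ^ n = 1" and "\<And>k. a ^ k = 1 \<Longrightarrow> k > 0 \<Longrightarrow> n \<le> k"
proof -
  have ex: "\<exists>n>0. a ^ n = 1"
    using assms unfolding mult_order_def by (auto split: if_splits)
  hence nd: "n = (LEAST n. n > 0 \<and> a ^ n = 1)" using assms unfolding mult_order_def by auto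
  show "a ^ n = 1" unfolding nd using LeastI_ex[of "\<lambda>n. n > 0 \<and> a ^ n = 1"] ex by auto
  fix k assume "a ^ k = 1" "k > 0"
  thus "n \<le> k" unfolding nd by (auto intro: Least_le)
qed

lemma mo_dvd:
  fixes a :: "'a::field"
  assumes "mult_order a = n" "n > 0" "a ^ k = 1"
  shows "n dvd k"
proof -
  have an: "a ^ n = 1" using mo_basic(1)[OF assms(1,2)] .
  have "a ^ k = (a ^ n) ^ (k div n) * a ^ (k mod n)"
    proof -
    have "a ^ k = a ^ (n * (k div n) + k mod n)" by simp
    also have "\<dots> = (a ^ n) ^ (k div n) * a ^ (k mod n)" by (simp only: power_add power_mult)
    finally show ?thesis .
  qed
  hence r: "a ^ (k mod n) = 1" using an assms(3) by simp
  have "k mod n < n" using assms(2) by simp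
  hence "k mod n = 0" using mo_basic(2)[OF assms(1,2) r] by (cases "k mod n = 0") auto
  thus ?thesis by auto
qed

lemma lin_coprime:
  fixes a b :: "'a::field_gcd"
  assumes "a \<noteq> b"
  shows "coprime [:1, - a:] [:1, - b:]"
proof (rule coprimeI)
  fix c assume c1: "c dvd [:1, - a:]" and c2: "c dvd [:1, - b:]"
  have "c dvd smult b [:1, - a:] - smult a [:1, - b:]"
    using dvd_smult[OF c1, of b] dvd_smult[OF c2, of a] by (rule dvd_diff)
  also have "smult b [:1, - a:] - smult a [:1, - b:] = [:b - a:]" by simp
  finally have "c dvd [:b - a:]" .
  moreover have "is_unit [:b - a:]" using assms by (auto simp: is_unit_const_poly_iff dvd_field_iff)
  ultimately show "is_unit c" using dvd_unit_imp_unit by blast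
qed

theorem lemma3:
  fixes \<alpha> \<beta> :: "'a::{finite,field_gcd}"
    and q s u s\<^sub>l n n\<^sub>l r :: nat
    and Z :: "nat set"
  assumes q: "prime_power q"
    and pos: "s > 0" "u > 0" "s\<^sub>l > 0"
    and r: "r = lcm s (u * s\<^sub>l)"
    and card: "card (UNIV :: 'a set) = q ^ r"
    and alpha_in: "\<alpha> ^ (q ^ s) = \<alpha>"
    and beta_in: "\<beta> ^ ((q ^ u) ^ s\<^sub>l) = \<beta>"
    and ord_alpha: "mult_order \<alpha> = n" and n: "n > 0"
    and ord_beta: "mult_order \<beta> = n\<^sub>l" and nl: "n\<^sub>l > 0"
    and Z: "Z \<subseteq> {0..<n\<^sub>l}"
    and cop: "gcd n n\<^sub>l = 1"
    and ij: "i < n" "j < n" "i \<noteq> j"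
  shows "gcd (\<Prod>m\<in>Z. [:1, - (\<alpha> ^ i * \<beta> ^ m):])
             (\<Prod>m\<in>Z. [:1, - (\<alpha> ^ j * \<beta> ^ m):]) = 1"
proof -
  have an: "\<alpha> ^ n = 1" using mo_basic(1)[OF ord_alpha n] .
  have bn: "\<beta> ^ n\<^sub>l = 1" using mo_basic(1)[OF ord_beta nl] .
  have a0: "\<alpha> \<noteq> 0"
  proof
    assume "\<alpha> = 0" hence "\<alpha> ^ n = 0" using n by simp
    thus False using an by simp
  qed
  have key: "\<alpha> ^ i * \<beta> ^ m \<noteq> \<alpha> ^ j * \<beta> ^ m'" if ij: "i < n" "j < n" "j < i" for i j m m' :: nat
  proof
    assume e: "\<alpha> ^ i * \<beta> ^ m = \<alpha> ^ j * \<beta> ^ m'"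
    have "(\<alpha> ^ i * \<beta> ^ m) ^ n\<^sub>l = (\<alpha> ^ j * \<beta> ^ m') ^ n\<^sub>l" using e by simp
    hence "(\<alpha> ^ n\<^sub>l) ^ i * (\<beta> ^ n\<^sub>l) ^ m = (\<alpha> ^ n\<^sub>l) ^ j * (\<beta> ^ n\<^sub>l) ^ m'"
      by (simp add: power_mult_distrib flip: power_mult) (simp add: mult.commute)
    hence "(\<alpha> ^ n\<^sub>l) ^ j * (\<alpha> ^ n\<^sub>l) ^ (i - j) = (\<alpha> ^ n\<^sub>l) ^ j * 1"
      using bn ij by (simp flip: power_add)
    hence "(\<alpha> ^ n\<^sub>l) ^ (i - j) = 1" using a0 by simp
    hence "\<alpha> ^ (n\<^sub>l * (i - j)) = 1" by (simp add: power_mult)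
    hence "n dvd n\<^sub>l * (i - j)" using mo_dvd[OF ord_alpha n] by blast
    hence "n dvd (i - j)" using cop by (metis coprime_dvd_mult_right_iff coprime_iff_gcd_eq_1)
    moreover have "0 < i - j" "i - j < n" using ij by auto
    ultimately show False using nat_dvd_not_less by blast
  qed
  have ne: "\<alpha> ^ i * \<beta> ^ m \<noteq> \<alpha> ^ j * \<beta> ^ m'" for m m'
    proof (cases "j < i")
    case True thus ?thesis using ij key[of i j] by blast
  next
    case False hence "i < j" using ij by simp
    thus ?thesis using ij key[of j i m' m] by metis
  qed
  have "coprime (\<Prod>m\<in>Z. [:1, - (\<alpha> ^ i * \<beta> ^ m):])
             (\<Prod>m\<in>Z. [:1, - (\<alpha> ^ j * \<beta> ^ m):])"
    by (intro prod_coprime_left prod_coprime_right lin_coprime ne)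
  thus ?thesis by (simp add: coprime_iff_gcd_eq_1)
qed

end
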